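(* Let $(G,+)$ be a metrizable abelian topological group and $\phi:G\to G$, $\phi(x)=-x$. Then the abstract HNN extension $H=\langle G,t\mid txt^{-1}=-x,\ x\in G\rangle$ admits a metrizable SIN group topology extending the topology of $G$ (i.e. with $G$ a topological subgroup of $H$).
   Context: A topological group is SIN if every neighborhood of the identity contains a neighborhood $V$ of the identity with $gVg^{-1}=V$ for all $g$. *)

theory Defs
  imports "HOL-Analysis.Analysis" "HOL-Algebra.Algebra"
begin

definition topological_group :: "('a, 'b) monoid_scheme \<Rightarrow> 'a topology \<Rightarrow> bool" where
  "topological_group G T \<longleftrightarrow>
     group G \<and> topspace T = carrier G \<and>
     continuous_map (prod_topology T T) T (\<lambda>p. fst p \<otimes>\<^bsub>G\<^esub> snd p) \<and>
     continuous_map T T (\<lambda>x. inv\<^bsub>G\<^esub> x)"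

definition is_nbhd :: "'a topology \<Rightarrow> 'a \<Rightarrow> 'a set \<Rightarrow> bool" where
  "is_nbhd T x N \<longleftrightarrow> (\<exists>U. openin T U \<and> x \<in> U \<and> U \<subseteq> N)"

definition SIN_group :: "('a, 'b) monoid_scheme \<Rightarrow> 'a topology \<Rightarrow> bool" where
  "SIN_group G T \<longleftrightarrow> topological_group G T \<and>
     (\<forall>N. is_nbhd T \<one>\<^bsub>G\<^esub> N \<longrightarrow>
        (\<exists>V. is_nbhd T \<one>\<^bsub>G\<^esub> V \<and> V \<subseteq> N \<and>
             (\<forall>g\<in>carrier G. (\<lambda>v. g \<otimes>\<^bsub>G\<^esub> v \<otimes>\<^bsub>G\<^esub> inv\<^bsub>G\<^esub> g) ` V = V)))"

text \<open>Letters: None is the stable letter t, Some x is the generator x of G;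
  the boolean flag is True for the letter itself and False for its formal inverse.\<close>

type_synonym 'a hnn_word = "('a option \<times> bool) list"

definition hnn_letters :: "('a, 'b) monoid_scheme \<Rightarrow> 'a option set" where
  "hnn_letters G = insert None (Some ` carrier G)"

definition hnn_words :: "('a, 'b) monoid_scheme \<Rightarrow> 'a hnn_word set" where
  "hnn_words G = lists (hnn_letters G \<times> UNIV)"

inductive hnn_eq :: "('a, 'b) monoid_scheme \<Rightarrow> 'a hnn_word \<Rightarrow> 'a hnn_word \<Rightarrow> bool"
  for G where
  refl: "w \<in> hnn_words G \<Longrightarrow> hnn_eq G w w"
| sym: "hnn_eq G u v \<Longrightarrow> hnn_eq G v u"
| trans: "hnn_eq G u v \<Longrightarrow> hnn_eq G v w \<Longrightarrow> hnn_eq G u w"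
| ctx: "hnn_eq G u v \<Longrightarrow> p \<in> hnn_words G \<Longrightarrow> q \<in> hnn_words G \<Longrightarrow>
        hnn_eq G (p @ u @ q) (p @ v @ q)"
| cancel: "a \<in> hnn_letters G \<Longrightarrow> hnn_eq G [(a, b), (a, \<not> b)] []"
| mult: "x \<in> carrier G \<Longrightarrow> y \<in> carrier G \<Longrightarrow>
         hnn_eq G [(Some x, True), (Some y, True)] [(Some (x \<otimes>\<^bsub>G\<^esub> y), True)]"
| one: "hnn_eq G [(Some \<one>\<^bsub>G\<^esub>, True)] []"
| conj: "x \<in> carrier G \<Longrightarrow>
         hnn_eq G [(None, True), (Some x, True), (None, False)] [(Some (inv\<^bsub>G\<^esub> x), True)]"

definition hnn_class :: "('a, 'b) monoid_scheme \<Rightarrow> 'a hnn_word \<Rightarrow> 'a hnn_word set" where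
  "hnn_class G w = {v. hnn_eq G w v}"

definition hnn_ext :: "('a, 'b) monoid_scheme \<Rightarrow> 'a hnn_word set monoid" where
  "hnn_ext G = \<lparr>carrier = hnn_words G // {(u, v). hnn_eq G u v},
                monoid.mult = (\<lambda>A B. {w. \<exists>u\<in>A. \<exists>v\<in>B. hnn_eq G (u @ v) w}),
                one = hnn_class G []\<rparr>"

definition hnn_incl :: "('a, 'b) monoid_scheme \<Rightarrow> 'a \<Rightarrow> 'a hnn_word set" where
  "hnn_incl G x = hnn_class G [(Some x, True)]"

end

theory Submission
  imports Defs
begin


definition sg :: "('a,'b) monoid_scheme \<Rightarrow> int \<Rightarrow> 'a \<Rightarrow> 'a" where
  "sg G n x = (if even n then x else inv\<^bsub>G\<^esub> x)"

definition smul :: "('a,'b) monoid_scheme \<Rightarrow> 'a \<times> int \<Rightarrow> 'a \<times> int \<Rightarrow> 'a \<times> int" where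
  "smul G p q = (fst p \<otimes>\<^bsub>G\<^esub> sg G (snd p) (fst q), snd p + snd q)"

definition sinv :: "('a,'b) monoid_scheme \<Rightarrow> 'a \<times> int \<Rightarrow> 'a \<times> int" where
  "sinv G p = (sg G (snd p) (inv\<^bsub>G\<^esub> fst p), - snd p)"

fun lval :: "('a,'b) monoid_scheme \<Rightarrow> 'a option \<times> bool \<Rightarrow> 'a \<times> int" where
  "lval G (Some x, True) = (x, 0)"
| "lval G (Some x, False) = (inv\<^bsub>G\<^esub> x, 0)"
| "lval G (None, True) = (\<one>\<^bsub>G\<^esub>, 1)"
| "lval G (None, False) = (\<one>\<^bsub>G\<^esub>, -1)"

fun ev :: "('a,'b) monoid_scheme \<Rightarrow> 'a hnn_word \<Rightarrow> 'a \<times> int" where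
  "ev G [] = (\<one>\<^bsub>G\<^esub>, 0)"
| "ev G (a # w) = smul G (lval G a) (ev G w)"

definition tp :: "int \<Rightarrow> 'a hnn_word" where
  "tp n = (if n \<ge> 0 then replicate (nat n) (None, True) else replicate (nat (- n)) (None, False))"

definition nf :: "'a \<times> int \<Rightarrow> 'a hnn_word" where
  "nf p = (Some (fst p), True) # tp (snd p)"

lemma words_Cons: "a # w \<in> hnn_words G \<longleftrightarrow> fst a \<in> hnn_letters G \<and> w \<in> hnn_words G"
  by (cases a) (auto simp: hnn_words_def)

lemma words_append[simp]: "u @ w \<in> hnn_words G \<longleftrightarrow> u \<in> hnn_words G \<and> w \<in> hnn_words G"
  by (auto simp: hnn_words_def)

lemma words_Nil[simp]: "[] \<in> hnn_words G"
  by (auto simp: hnn_words_def)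

lemma tp_words[simp]: "tp n \<in> hnn_words G"
  by (auto simp: tp_def hnn_words_def hnn_letters_def)

lemma hnn_eq_refl': "w \<in> hnn_words G \<Longrightarrow> hnn_eq G w w" by (rule hnn_eq.refl)

context comm_group
begin

lemma hnn_eq_words: "hnn_eq G u v \<Longrightarrow> u \<in> hnn_words G \<and> v \<in> hnn_words G"
  by (induction rule: hnn_eq.induct) (auto simp: hnn_words_def hnn_letters_def)

lemma hnn_eq_app:
  assumes "hnn_eq G u u'" "hnn_eq G v v'"
  shows "hnn_eq G (u @ v) (u' @ v')"
proof -
  have w: "u \<in> hnn_words G" "u' \<in> hnn_words G" "v \<in> hnn_words G" "v' \<in> hnn_words G"
    using hnn_eq_words[OF assms(1)] hnn_eq_words[OF assms(2)] by auto
  have "hnn_eq G ([] @ u @ v) ([] @ u' @ v)" by (rule hnn_eq.ctx[OF assms(1)]) (use w in auto)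
  moreover have "hnn_eq G (u' @ v @ []) (u' @ v' @ [])" by (rule hnn_eq.ctx[OF assms(2)]) (use w in auto)
  ultimately show ?thesis using hnn_eq.trans by fastforce
qed


lemma sg_closed[simp]: "x \<in> carrier G \<Longrightarrow> sg G n x \<in> carrier G"
  by (simp add: sg_def)

lemma sg_mult: "x \<in> carrier G \<Longrightarrow> y \<in> carrier G \<Longrightarrow> sg G n (x \<otimes> y) = sg G n x \<otimes> sg G n y"
  by (simp add: sg_def inv_mult)

lemma sg_sg: "x \<in> carrier G \<Longrightarrow> sg G n (sg G m x) = sg G (n + m) x"
  by (simp add: sg_def)

lemma sg_one[simp]: "sg G n \<one> = \<one>" by (simp add: sg_def)

lemma sg_inv: "x \<in> carrier G \<Longrightarrow> sg G n (inv x) = inv (sg G n x)"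
  by (simp add: sg_def)

lemma sg_uminus[simp]: "sg G (- n) x = sg G n x" by (simp add: sg_def)

lemma sg_0[simp]: "sg G 0 x = x" by (simp add: sg_def)

lemma smul_closed: "fst p \<in> carrier G \<Longrightarrow> fst q \<in> carrier G \<Longrightarrow> fst (smul G p q) \<in> carrier G"
  by (simp add: smul_def)

lemma smul_assoc:
  assumes "fst p \<in> carrier G" "fst q \<in> carrier G" "fst r \<in> carrier G"
  shows "smul G (smul G p q) r = smul G p (smul G q r)"
  using assms by (simp add: smul_def sg_mult sg_sg m_assoc add.commute add.left_commute)

lemma smul_one_left: "fst p \<in> carrier G \<Longrightarrow> smul G (\<one>, 0) p = p"
  by (simp add: smul_def)

lemma smul_sinv: "fst p \<in> carrier G \<Longrightarrow> smul G (sinv G p) p = (\<one>, 0)"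
  by (simp add: smul_def sinv_def sg_sg sg_inv)

lemma sinv_closed: "fst p \<in> carrier G \<Longrightarrow> fst (sinv G p) \<in> carrier G"
  by (simp add: sinv_def)

lemma lval_closed: "fst (lval G a) \<in> carrier G" if "fst a \<in> hnn_letters G"
proof (cases a)
  case (Pair x b) then show ?thesis using that by (cases x; cases b) (auto simp: hnn_letters_def)
qed

lemma ev_closed: "w \<in> hnn_words G \<Longrightarrow> fst (ev G w) \<in> carrier G"
  by (induction w) (auto simp: words_Cons smul_closed lval_closed)

lemma ev_append: "u \<in> hnn_words G \<Longrightarrow> v \<in> hnn_words G \<Longrightarrow> ev G (u @ v) = smul G (ev G u) (ev G v)"
proof (induction u)
  case Nil then show ?case by (simp add: smul_one_left ev_closed)
next
  case (Cons a u)
  then show ?case by (simp add: words_Cons smul_assoc lval_closed ev_closed)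
qed

lemma ev_resp: "hnn_eq G u v \<Longrightarrow> ev G u = ev G v"
proof (induction rule: hnn_eq.induct)
  case (ctx u v p q)
  then show ?case using hnn_eq_words[OF ctx(1)] by (simp add: ev_append)
next
  case (cancel a b)
  then show ?case by (cases a; cases b) (auto simp: smul_def sg_def hnn_letters_def)
next
  case (mult x y) then show ?case by (simp add: smul_def)
next
  case one then show ?case by (simp add: smul_def)
next
  case (conj x) then show ?case by (simp add: smul_def sg_def)
qed auto


declare hnn_eq.trans[trans]

lemma cancelT: "a \<in> hnn_letters G \<Longrightarrow> hnn_eq G [(a,True),(a,False)] []"
  using hnn_eq.cancel[of a G True] by simp
lemma cancelF: "a \<in> hnn_letters G \<Longrightarrow> hnn_eq G [(a,False),(a,True)] []"
  using hnn_eq.cancel[of a G False] by simp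

lemma letN[simp]: "None \<in> hnn_letters G" by (simp add: hnn_letters_def)
lemma letS[simp]: "Some x \<in> hnn_letters G \<longleftrightarrow> x \<in> carrier G" by (auto simp: hnn_letters_def)

lemma words_simps[simp]: "(a, b) # w \<in> hnn_words G \<longleftrightarrow> a \<in> hnn_letters G \<and> w \<in> hnn_words G"
  by (simp add: words_Cons)

lemma ev_repT: "ev G (replicate k (None, True)) = (\<one>, int k)"
  by (induction k) (auto simp: smul_def)
lemma ev_repF: "ev G (replicate k (None, False)) = (\<one>, - int k)"
  by (induction k) (auto simp: smul_def sg_def)
lemma ev_tp: "ev G (tp n) = (\<one>, n)"
  by (simp add: tp_def ev_repT ev_repF)
lemma ev_nf: "fst p \<in> carrier G \<Longrightarrow> ev G (nf p) = p"
  by (simp add: nf_def ev_tp smul_def)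
lemma nf_words: "fst p \<in> carrier G \<Longrightarrow> nf p \<in> hnn_words G"
  by (simp add: nf_def)

lemma tp_pos: "n \<ge> 0 \<Longrightarrow> tp (n+1) = (None,True) # tp n"
  by (simp add: tp_def nat_add_distrib)
lemma tp_neg: "n < 0 \<Longrightarrow> tp n = (None,False) # tp (n+1)"
proof -
  assume "n < 0"
  then have "nat (-n) = Suc (nat (- (n+1)))" by simp
  then show ?thesis using \<open>n<0\<close> by (simp add: tp_def)
qed
lemma tp_nonpos: "n \<le> 0 \<Longrightarrow> tp (n-1) = (None,False) # tp n"
proof -
  assume "n \<le> 0"
  then have "nat (-(n-1)) = Suc (nat (- n))" by simp
  then show ?thesis using \<open>n\<le>0\<close> by (auto simp: tp_def)
qed
lemma tp_posd: "n > 0 \<Longrightarrow> tp n = (None,True) # tp (n-1)"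
proof -
  assume "n > 0"
  then have "nat n = Suc (nat (n-1))" by simp
  then show ?thesis using \<open>n>0\<close> by (auto simp: tp_def)
qed

lemma L1: assumes "x \<in> carrier G"
  shows "hnn_eq G [(Some x,False)] [(Some (inv x),True)]"
proof -
  have "hnn_eq G [(Some (inv x),True)] ([(Some (inv x),True)] @ [])"
    using assms by (simp add: hnn_eq.refl)
  also have "hnn_eq G \<dots> ([(Some (inv x),True)] @ [(Some x,True),(Some x,False)])"
    using assms by (intro hnn_eq_app hnn_eq.refl hnn_eq.sym[OF cancelT]) auto
  also have "\<dots> = [(Some (inv x),True),(Some x,True)] @ [(Some x,False)]" by simp
  also have "hnn_eq G \<dots> ([(Some (inv x \<otimes> x),True)] @ [(Some x,False)])"
    using assms by (intro hnn_eq_app hnn_eq.refl hnn_eq.mult) auto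
  also have "hnn_eq G \<dots> ([] @ [(Some x,False)])"
    using assms by (intro hnn_eq_app hnn_eq.refl) (auto intro: hnn_eq.one)
  finally show ?thesis by (simp add: hnn_eq.sym)
qed

lemma L2: assumes "g \<in> carrier G"
  shows "hnn_eq G [(None,True),(Some g,True)] [(Some (inv g),True),(None,True)]"
proof -
  have "[(None,True),(Some g,True)] = [(None,True),(Some g,True)] @ []" by simp
  also have "hnn_eq G \<dots> ([(None,True),(Some g,True)] @ [(None,False),(None,True)])"
    using assms by (intro hnn_eq_app hnn_eq.refl hnn_eq.sym[OF cancelF]) auto
  also have "\<dots> = [(None,True),(Some g,True),(None,False)] @ [(None,True)]" by simp
  also have "hnn_eq G \<dots> ([(Some (inv g),True)] @ [(None,True)])"
    using assms by (intro hnn_eq_app hnn_eq.refl hnn_eq.conj) auto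
  finally show ?thesis by simp
qed

lemma L2': assumes "g \<in> carrier G"
  shows "hnn_eq G [(None,False),(Some g,True)] [(Some (inv g),True),(None,False)]"
proof -
  have c: "hnn_eq G [(None,True),(Some (inv g),True),(None,False)] [(Some g,True)]"
    using hnn_eq.conj[of "inv g" G] assms by simp
  have "[(None,False),(Some g,True)] = [(None,False)] @ [(Some g,True)]" by simp
  also have "hnn_eq G \<dots> ([(None,False)] @ [(None,True),(Some (inv g),True),(None,False)])"
    using assms by (intro hnn_eq_app hnn_eq.refl hnn_eq.sym[OF c]) auto
  also have "\<dots> = [(None,False),(None,True)] @ [(Some (inv g),True),(None,False)]" by simp
  also have "hnn_eq G \<dots> ([] @ [(Some (inv g),True),(None,False)])"
    using assms by (intro hnn_eq_app hnn_eq.refl cancelF) auto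
  finally show ?thesis by simp
qed

lemma L3: "hnn_eq G ((None,True) # tp n) (tp (n+1))"
proof (cases "n \<ge> 0")
  case True then show ?thesis by (simp add: tp_pos hnn_eq.refl)
next
  case False
  then have "(None,True) # tp n = [(None,True),(None,False)] @ tp (n+1)" by (simp add: tp_neg)
  also have "hnn_eq G \<dots> ([] @ tp (n+1))" by (intro hnn_eq_app hnn_eq.refl cancelT) auto
  finally show ?thesis by simp
qed

lemma L3': "hnn_eq G ((None,False) # tp n) (tp (n-1))"
proof (cases "n \<le> 0")
  case True then show ?thesis by (simp add: tp_nonpos hnn_eq.refl)
next
  case False
  then have "(None,False) # tp n = [(None,False),(None,True)] @ tp (n-1)" by (simp add: tp_posd)
  also have "hnn_eq G \<dots> ([] @ tp (n-1))" by (intro hnn_eq_app hnn_eq.refl cancelF) auto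
  finally show ?thesis by simp
qed

lemma step:
  assumes a: "fst a \<in> hnn_letters G" and g: "g \<in> carrier G"
  shows "hnn_eq G (a # nf (g, n)) (nf (smul G (lval G a) (g, n)))"
proof (cases a)
  case (Pair x b)
  show ?thesis
  proof (cases x)
    case None
    show ?thesis
    proof (cases b)
      case True
      have "a # nf (g,n) = [(None,True),(Some g,True)] @ tp n" using Pair None True by (simp add: nf_def)
      also have "hnn_eq G \<dots> ([(Some (inv g),True),(None,True)] @ tp n)"
        using g by (intro hnn_eq_app hnn_eq.refl L2) auto
      also have "\<dots> = [(Some (inv g),True)] @ ((None,True) # tp n)" by simp
      also have "hnn_eq G \<dots> ([(Some (inv g),True)] @ tp (n+1))"
        using g by (intro hnn_eq_app hnn_eq.refl L3) auto
      finally show ?thesis using Pair None True g by (simp add: nf_def smul_def sg_def add.commute)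
    next
      case False
      have "a # nf (g,n) = [(None,False),(Some g,True)] @ tp n" using Pair None False by (simp add: nf_def)
      also have "hnn_eq G \<dots> ([(Some (inv g),True),(None,False)] @ tp n)"
        using g by (intro hnn_eq_app hnn_eq.refl L2') auto
      also have "\<dots> = [(Some (inv g),True)] @ ((None,False) # tp n)" by simp
      also have "hnn_eq G \<dots> ([(Some (inv g),True)] @ tp (n-1))"
        using g by (intro hnn_eq_app hnn_eq.refl L3') auto
      finally show ?thesis using Pair None False g by (simp add: nf_def smul_def sg_def)
    qed
  next
    case (Some y)
    with a Pair have y: "y \<in> carrier G" by simp
    show ?thesis
    proof (cases b)
      case True
      have "a # nf (g,n) = [(Some y,True),(Some g,True)] @ tp n" using Pair Some True by (simp add: nf_def)
      also have "hnn_eq G \<dots> ([(Some (y \<otimes> g),True)] @ tp n)"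
        using g y by (intro hnn_eq_app hnn_eq.refl hnn_eq.mult) auto
      finally show ?thesis using Pair Some True g by (simp add: nf_def smul_def)
    next
      case False
      have "a # nf (g,n) = [(Some y,False)] @ [(Some g,True)] @ tp n" using Pair Some False by (simp add: nf_def)
      also have "hnn_eq G \<dots> ([(Some (inv y),True)] @ [(Some g,True)] @ tp n)"
        using g y by (intro hnn_eq_app hnn_eq.refl L1) auto
      also have "\<dots> = [(Some (inv y),True),(Some g,True)] @ tp n" by simp
      also have "hnn_eq G \<dots> ([(Some (inv y \<otimes> g),True)] @ tp n)"
        using g y by (intro hnn_eq_app hnn_eq.refl hnn_eq.mult) auto
      finally show ?thesis using Pair Some False g by (simp add: nf_def smul_def)
    qed
  qed
qed

lemma nf_eq: "w \<in> hnn_words G \<Longrightarrow> hnn_eq G w (nf (ev G w))"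
proof (induction w)
  case Nil
  show ?case using hnn_eq.sym[OF hnn_eq.one[of G]] by (simp add: nf_def tp_def)
next
  case (Cons a w)
  then have a: "fst a \<in> hnn_letters G" and w: "w \<in> hnn_words G" by (auto simp: words_Cons)
  obtain g n where gn: "ev G w = (g, n)" by (cases "ev G w")
  have g: "g \<in> carrier G" using ev_closed[OF w] gn by simp
  have "a # w = [a] @ w" by simp
  also have "hnn_eq G \<dots> ([a] @ nf (ev G w))"
    using Cons a w by (intro hnn_eq_app hnn_eq.refl) (auto simp: words_Cons)
  also have "\<dots> = a # nf (g, n)" using gn by simp
  also have "hnn_eq G \<dots> (nf (smul G (lval G a) (g, n)))" by (rule step[OF a g])
  finally show ?case using gn by simp
qed

lemma ev_inj: "u \<in> hnn_words G \<Longrightarrow> v \<in> hnn_words G \<Longrightarrow> ev G u = ev G v \<Longrightarrow> hnn_eq G u v"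
  using nf_eq[of u] nf_eq[of v] by (metis hnn_eq.sym hnn_eq.trans)


lemma class_mem: "w \<in> hnn_words G \<Longrightarrow> w \<in> hnn_class G w"
  by (simp add: hnn_class_def hnn_eq.refl)

lemma carrier_H: "A \<in> carrier (hnn_ext G) \<longleftrightarrow> (\<exists>w\<in>hnn_words G. A = hnn_class G w)"
  by (auto simp: hnn_ext_def quotient_def hnn_class_def)

lemma class_eq: "u \<in> hnn_words G \<Longrightarrow> v \<in> hnn_words G \<Longrightarrow>
   hnn_class G u = hnn_class G v \<longleftrightarrow> ev G u = ev G v"
proof
  assume u: "u \<in> hnn_words G" and v: "v \<in> hnn_words G" and e: "hnn_class G u = hnn_class G v"
  then have "v \<in> hnn_class G u" using class_mem[OF v] by simp
  then show "ev G u = ev G v" by (simp add: hnn_class_def ev_resp)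
next
  assume u: "u \<in> hnn_words G" and v: "v \<in> hnn_words G" and e: "ev G u = ev G v"
  then have "hnn_eq G u v" by (rule ev_inj)
  then show "hnn_class G u = hnn_class G v"
    by (auto simp: hnn_class_def intro: hnn_eq.trans hnn_eq.sym)
qed

lemma mult_H: "u \<in> hnn_words G \<Longrightarrow> v \<in> hnn_words G \<Longrightarrow>
   hnn_class G u \<otimes>\<^bsub>hnn_ext G\<^esub> hnn_class G v = hnn_class G (u @ v)"
  by (auto simp: hnn_ext_def hnn_class_def intro: hnn_eq.trans hnn_eq.refl hnn_eq_app)

lemma one_H: "\<one>\<^bsub>hnn_ext G\<^esub> = hnn_class G []"
  by (simp add: hnn_ext_def)

definition FF :: "'a hnn_word set \<Rightarrow> 'a \<times> int" where
  "FF A = ev G (SOME w. w \<in> A)"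

lemma FF_class: "w \<in> hnn_words G \<Longrightarrow> FF (hnn_class G w) = ev G w"
proof -
  assume w: "w \<in> hnn_words G"
  have "(SOME v. v \<in> hnn_class G w) \<in> hnn_class G w" using class_mem[OF w] by (rule someI)
  then show ?thesis by (simp add: FF_def hnn_class_def ev_resp)
qed

lemma H_group: "group (hnn_ext G)"
proof (rule groupI)
  fix x y assume "x \<in> carrier (hnn_ext G)" "y \<in> carrier (hnn_ext G)"
  then show "x \<otimes>\<^bsub>hnn_ext G\<^esub> y \<in> carrier (hnn_ext G)"
    by (auto simp: carrier_H mult_H)
next
  show "\<one>\<^bsub>hnn_ext G\<^esub> \<in> carrier (hnn_ext G)" by (auto simp: carrier_H one_H)
next
  fix x y z assume "x \<in> carrier (hnn_ext G)" "y \<in> carrier (hnn_ext G)" "z \<in> carrier (hnn_ext G)"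
  then show "x \<otimes>\<^bsub>hnn_ext G\<^esub> y \<otimes>\<^bsub>hnn_ext G\<^esub> z = x \<otimes>\<^bsub>hnn_ext G\<^esub> (y \<otimes>\<^bsub>hnn_ext G\<^esub> z)"
    by (auto simp: carrier_H mult_H)
next
  fix x assume "x \<in> carrier (hnn_ext G)"
  then show "\<one>\<^bsub>hnn_ext G\<^esub> \<otimes>\<^bsub>hnn_ext G\<^esub> x = x"
    by (auto simp: carrier_H mult_H one_H)
next
  fix x assume "x \<in> carrier (hnn_ext G)"
  then obtain w where w: "w \<in> hnn_words G" "x = hnn_class G w" by (auto simp: carrier_H)
  let ?v = "nf (sinv G (ev G w))"
  have vw: "?v \<in> hnn_words G" by (rule nf_words) (simp add: sinv_closed ev_closed w)
  have "hnn_class G ?v \<otimes>\<^bsub>hnn_ext G\<^esub> x = \<one>\<^bsub>hnn_ext G\<^esub>"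
    using w vw by (simp add: mult_H one_H class_eq ev_append ev_nf sinv_closed ev_closed smul_sinv)
  then show "\<exists>y\<in>carrier (hnn_ext G). y \<otimes>\<^bsub>hnn_ext G\<^esub> x = \<one>\<^bsub>hnn_ext G\<^esub>"
    using vw carrier_H by blast
qed


lemma FF_closed: "A \<in> carrier (hnn_ext G) \<Longrightarrow> fst (FF A) \<in> carrier G"
  by (auto simp: carrier_H FF_class ev_closed)

lemma FF_mult: "A \<in> carrier (hnn_ext G) \<Longrightarrow> B \<in> carrier (hnn_ext G) \<Longrightarrow>
    FF (A \<otimes>\<^bsub>hnn_ext G\<^esub> B) = smul G (FF A) (FF B)"
  by (auto simp: carrier_H FF_class mult_H ev_append)

lemma FI_carrier: "fst p \<in> carrier G \<Longrightarrow> hnn_class G (nf p) \<in> carrier (hnn_ext G)"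
  using nf_words carrier_H by blast

lemma FF_FI: "fst p \<in> carrier G \<Longrightarrow> FF (hnn_class G (nf p)) = p"
  by (simp add: FF_class nf_words ev_nf)

lemma FI_FF: "A \<in> carrier (hnn_ext G) \<Longrightarrow> hnn_class G (nf (FF A)) = A"
proof -
  assume "A \<in> carrier (hnn_ext G)"
  then obtain w where w: "w \<in> hnn_words G" "A = hnn_class G w" by (auto simp: carrier_H)
  have "hnn_class G (nf (ev G w)) = hnn_class G w"
    using class_eq[OF nf_words[OF ev_closed[OF w(1)]] w(1)] ev_nf[OF ev_closed[OF w(1)]] by simp
  then show ?thesis using w by (simp add: FF_class)
qed

lemma FF_one: "FF \<one>\<^bsub>hnn_ext G\<^esub> = (\<one>, 0)"
  by (simp add: one_H FF_class)

lemma FF_inv: assumes A: "A \<in> carrier (hnn_ext G)"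
  shows "FF (inv\<^bsub>hnn_ext G\<^esub> A) = sinv G (FF A)"
proof -
  interpret Hg: group "hnn_ext G" by (rule H_group)
  let ?y = "hnn_class G (nf (sinv G (FF A)))"
  have y: "?y \<in> carrier (hnn_ext G)" by (rule FI_carrier) (simp add: sinv_closed FF_closed A)
  have Fy: "FF ?y = sinv G (FF A)" by (rule FF_FI) (simp add: sinv_closed FF_closed A)
  have "FF (?y \<otimes>\<^bsub>hnn_ext G\<^esub> A) = (\<one>, 0)"
    using y A Fy by (simp add: FF_mult smul_sinv FF_closed)
  then have "?y \<otimes>\<^bsub>hnn_ext G\<^esub> A = \<one>\<^bsub>hnn_ext G\<^esub>"
    using FI_FF[of "?y \<otimes>\<^bsub>hnn_ext G\<^esub> A"] FI_FF[of "\<one>\<^bsub>hnn_ext G\<^esub>"] FF_one y A by simp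
  then have "inv\<^bsub>hnn_ext G\<^esub> A = ?y" using Hg.inv_equality y A by blast
  then show ?thesis using Fy by simp
qed

lemma incl_eq: "hnn_incl G x = hnn_class G (nf (x, 0))"
  by (simp add: hnn_incl_def nf_def tp_def)

lemma smul_conj: "fst p \<in> carrier G \<Longrightarrow> x \<in> carrier G \<Longrightarrow>
   smul G (smul G p (x, 0)) (sinv G p) = (sg G (snd p) x, 0)"
proof -
  assume a: "fst p \<in> carrier G" "x \<in> carrier G"
  have c: "fst p \<otimes> (y \<otimes> inv (fst p)) = y" if "y \<in> carrier G" for y
    using that a by (metis m_lcomm r_inv r_one inv_closed)
  have d: "sg G (2 * snd p) z = z" for z by (simp add: sg_def)
  show ?thesis using a by (simp add: smul_def sinv_def sg_sg m_assoc d c)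
qed

end

lemma cont_parity:
  assumes k: "continuous_map Z (discrete_topology (UNIV::int set)) k"
    and f: "continuous_map Z Y f" and g: "continuous_map Z Y g"
  shows "continuous_map Z Y (\<lambda>x. if even (k x) then f x else g x)"
proof (rule pasting_lemma[where I = "UNIV::bool set" and T = "\<lambda>b. {x \<in> topspace Z. k x \<in> {n. even n = b}}"
      and f = "\<lambda>b. if b then f else g"])
  fix b :: bool
  show "openin Z {x \<in> topspace Z. k x \<in> {n. even n = b}}"
    by (rule openin_continuous_map_preimage[OF k]) simp
  show "continuous_map (subtopology Z {x \<in> topspace Z. k x \<in> {n. even n = b}}) Y (if b then f else g)"
    using f g by (auto intro: continuous_map_from_subtopology)
qed auto

lemma cont_add_discrete:
  assumes a: "continuous_map Z (discrete_topology (UNIV::int set)) a"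
    and b: "continuous_map Z (discrete_topology (UNIV::int set)) b"
  shows "continuous_map Z (discrete_topology (UNIV::int set)) (\<lambda>x. a x + b x)"
proof -
  have "continuous_map Z (prod_topology (discrete_topology (UNIV::int set)) (discrete_topology (UNIV::int set))) (\<lambda>x. (a x, b x))"
    using a b by (simp add: continuous_map_paired)
  then have p: "continuous_map Z (discrete_topology (UNIV \<times> UNIV :: (int \<times> int) set)) (\<lambda>x. (a x, b x))"
    by (simp add: prod_topology_discrete_topology[symmetric])
  have q: "continuous_map (discrete_topology (UNIV \<times> UNIV :: (int \<times> int) set)) (discrete_topology (UNIV::int set)) (\<lambda>p. fst p + snd p)"
    by simp
  show ?thesis using continuous_map_compose[OF p q] by (simp add: o_def)
qed

lemma cont_neg_discrete:
  assumes a: "continuous_map Z (discrete_topology (UNIV::int set)) a"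
  shows "continuous_map Z (discrete_topology (UNIV::int set)) (\<lambda>x. - a x)"
proof -
  have q: "continuous_map (discrete_topology (UNIV::int set)) (discrete_topology (UNIV::int set)) uminus"
    by simp
  show ?thesis using continuous_map_compose[OF a q] by (simp add: o_def)
qed


locale tsetting = comm_group +
  fixes TG :: "'a topology"
  assumes tg: "topological_group G TG"
begin

definition DD :: "int topology" where "DD = discrete_topology UNIV"
definition KK where "KK = prod_topology TG DD"

lemma TGsp: "topspace TG = carrier G" using tg by (simp add: topological_group_def)
lemma TGmul: "continuous_map (prod_topology TG TG) TG (\<lambda>p. fst p \<otimes> snd p)"
  using tg by (simp add: topological_group_def)
lemma TGinv: "continuous_map TG TG (\<lambda>x. inv x)"
  using tg by (simp add: topological_group_def)

lemma KKsp: "topspace KK = carrier G \<times> UNIV"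
  by (simp add: KK_def DD_def TGsp)

lemma sg_cont:
  assumes k: "continuous_map Z DD k" and f: "continuous_map Z TG f"
  shows "continuous_map Z TG (\<lambda>x. sg G (k x) (f x))"
proof -
  have "continuous_map Z TG (\<lambda>x. if even (k x) then f x else inv (f x))"
    using cont_parity[OF k[unfolded DD_def] f continuous_map_compose[OF f TGinv, unfolded o_def]] .
  then show ?thesis by (simp add: sg_def)
qed

lemma SM_cont: "continuous_map (prod_topology KK KK) KK (\<lambda>pq. smul G (fst pq) (snd pq))"
proof -
  have f1: "continuous_map (prod_topology KK KK) TG (\<lambda>pq. fst (fst pq))"
    using continuous_map_compose[OF continuous_map_fst[of "prod_topology TG DD" "prod_topology TG DD"] continuous_map_fst[of TG DD]]
    unfolding KK_def o_def .
  have f2: "continuous_map (prod_topology KK KK) TG (\<lambda>pq. fst (snd pq))"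
    using continuous_map_compose[OF continuous_map_snd[of "prod_topology TG DD" "prod_topology TG DD"] continuous_map_fst[of TG DD]]
    unfolding KK_def o_def .
  have k1: "continuous_map (prod_topology KK KK) DD (\<lambda>pq. snd (fst pq))"
    using continuous_map_compose[OF continuous_map_fst[of "prod_topology TG DD" "prod_topology TG DD"] continuous_map_snd[of TG DD]]
    unfolding KK_def o_def .
  have k2: "continuous_map (prod_topology KK KK) DD (\<lambda>pq. snd (snd pq))"
    using continuous_map_compose[OF continuous_map_snd[of "prod_topology TG DD" "prod_topology TG DD"] continuous_map_snd[of TG DD]]
    unfolding KK_def o_def .
  have "continuous_map (prod_topology KK KK) (prod_topology TG TG)
      (\<lambda>pq. (fst (fst pq), sg G (snd (fst pq)) (fst (snd pq))))"
    using f1 sg_cont[OF k1 f2] by (simp add: continuous_map_paired)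
  from continuous_map_compose[OF this TGmul]
  have c1: "continuous_map (prod_topology KK KK) TG (\<lambda>pq. fst (fst pq) \<otimes> sg G (snd (fst pq)) (fst (snd pq)))"
    by (simp add: o_def)
  have c2: "continuous_map (prod_topology KK KK) DD (\<lambda>pq. snd (fst pq) + snd (snd pq))"
    using cont_add_discrete[OF k1[unfolded DD_def] k2[unfolded DD_def]] by (simp add: DD_def)
  show ?thesis using c1 c2 unfolding smul_def by (simp add: KK_def continuous_map_paired)
qed

lemma SI_cont: "continuous_map KK KK (sinv G)"
proof -
  have f: "continuous_map KK TG (\<lambda>p. inv (fst p))"
    using continuous_map_compose[OF continuous_map_fst[of TG DD] TGinv]
    unfolding KK_def o_def .
  have k: "continuous_map KK DD snd"
    unfolding KK_def by (rule continuous_map_snd)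
  have c2: "continuous_map KK DD (\<lambda>p. - snd p)"
    using cont_neg_discrete[OF k[unfolded DD_def]] by (simp add: DD_def)
  show ?thesis using sg_cont[OF k f] c2 unfolding sinv_def by (simp add: KK_def continuous_map_paired)
qed


definition TH where "TH = pullback_topology (carrier (hnn_ext G)) FF KK"
definition FI where "FI p = hnn_class G (nf p)"

lemma THsp: "topspace TH = carrier (hnn_ext G)"
  by (auto simp: TH_def topspace_pullback_topology KKsp FF_closed mem_Times_iff)

lemma FF_cont: "continuous_map TH KK FF"
  using continuous_map_pullback[OF continuous_map_id[of KK], of "carrier (hnn_ext G)" FF]
  unfolding TH_def by (simp add: o_def id_def)

lemma FI_cont: "continuous_map KK TH FI"
  unfolding TH_def
proof (rule continuous_map_pullback')
  show "continuous_map KK KK (FF \<circ> FI)"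
    by (rule continuous_map_eq[OF continuous_map_id]) (auto simp: KKsp FI_def FF_FI)
  show "topspace KK \<subseteq> FI -` carrier (hnn_ext G)"
    by (auto simp: KKsp FI_def FI_carrier)
qed

lemma hm: "homeomorphic_maps TH KK FF FI"
  unfolding homeomorphic_maps_def
  using FF_cont FI_cont by (auto simp: THsp KKsp FI_def FF_FI FI_FF)

lemma mult_cont: "continuous_map (prod_topology TH TH) TH (\<lambda>p. fst p \<otimes>\<^bsub>hnn_ext G\<^esub> snd p)"
proof -
  interpret Hg: group "hnn_ext G" by (rule H_group)
  have p: "continuous_map (prod_topology TH TH) (prod_topology KK KK) (\<lambda>p. (FF (fst p), FF (snd p)))"
    using continuous_map_compose[OF continuous_map_fst[of TH TH] FF_cont]
          continuous_map_compose[OF continuous_map_snd[of TH TH] FF_cont]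
    by (simp add: continuous_map_paired o_def)
  have c: "continuous_map (prod_topology TH TH) KK (\<lambda>p. smul G (FF (fst p)) (FF (snd p)))"
    using continuous_map_compose[OF p SM_cont] by (simp add: o_def)
  have "continuous_map (prod_topology TH TH) (pullback_topology (carrier (hnn_ext G)) FF KK) (\<lambda>p. fst p \<otimes>\<^bsub>hnn_ext G\<^esub> snd p)"
  proof (rule continuous_map_pullback')
    show "continuous_map (prod_topology TH TH) KK (FF \<circ> (\<lambda>p. fst p \<otimes>\<^bsub>hnn_ext G\<^esub> snd p))"
      by (rule continuous_map_eq[OF c]) (auto simp: THsp FF_mult)
    show "topspace (prod_topology TH TH) \<subseteq> (\<lambda>p. fst p \<otimes>\<^bsub>hnn_ext G\<^esub> snd p) -` carrier (hnn_ext G)"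
      by (auto simp: THsp)
  qed
  then show ?thesis by (simp add: TH_def[symmetric])
qed


lemma inv_cont: "continuous_map TH TH (\<lambda>x. inv\<^bsub>hnn_ext G\<^esub> x)"
proof -
  interpret Hg: group "hnn_ext G" by (rule H_group)
  have c: "continuous_map TH KK (\<lambda>x. sinv G (FF x))"
    using continuous_map_compose[OF FF_cont SI_cont] by (simp add: o_def)
  have "continuous_map TH (pullback_topology (carrier (hnn_ext G)) FF KK) (\<lambda>x. inv\<^bsub>hnn_ext G\<^esub> x)"
  proof (rule continuous_map_pullback')
    show "continuous_map TH KK (FF \<circ> (\<lambda>x. inv\<^bsub>hnn_ext G\<^esub> x))"
      by (rule continuous_map_eq[OF c]) (auto simp: THsp FF_inv)
    show "topspace TH \<subseteq> (\<lambda>x. inv\<^bsub>hnn_ext G\<^esub> x) -` carrier (hnn_ext G)"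
      by (auto simp: THsp)
  qed
  then show ?thesis by (simp add: TH_def[symmetric])
qed

lemma TH_topgroup: "topological_group (hnn_ext G) TH"
  unfolding topological_group_def using H_group THsp mult_cont inv_cont by blast

lemma TH_metrizable: "metrizable_space TG \<Longrightarrow> metrizable_space TH"
proof -
  assume m: "metrizable_space TG"
  have "metrizable_space KK"
    unfolding KK_def DD_def using m by (simp add: metrizable_space_prod_topology)
  then show ?thesis
    using homeomorphic_metrizable_space[OF homeomorphic_maps_imp_homeomorphic_space[OF hm]] by simp
qed

lemma incl_hom: "hnn_incl G \<in> hom G (hnn_ext G)"
proof (rule homI)
  fix x assume "x \<in> carrier G"
  then show "hnn_incl G x \<in> carrier (hnn_ext G)" by (simp add: incl_eq FI_carrier)
next
  fix x y assume xy: "x \<in> carrier G" "y \<in> carrier G"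
  have w: "nf (x,0) \<in> hnn_words G" "nf (y,0) \<in> hnn_words G" "nf (x \<otimes> y,0) \<in> hnn_words G"
    using xy by (auto intro!: nf_words)
  show "hnn_incl G (x \<otimes> y) = hnn_incl G x \<otimes>\<^bsub>hnn_ext G\<^esub> hnn_incl G y"
    using w xy by (simp add: incl_eq mult_H class_eq ev_append ev_nf smul_def)
qed

lemma incl_embed: "embedding_map TG TH (hnn_incl G)"
proof (rule section_imp_embedding_map)
  have j: "continuous_map TG KK (\<lambda>x. (x, 0))"
    unfolding KK_def DD_def by (simp add: continuous_map_paired)
  have ci: "continuous_map TG TH (hnn_incl G)"
    by (rule continuous_map_eq[OF continuous_map_compose[OF j FI_cont]]) (simp add: FI_def incl_eq)
  have cr: "continuous_map TH TG (fst \<circ> FF)"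
    using continuous_map_compose[OF FF_cont[unfolded KK_def] continuous_map_fst[of TG DD]] .
  have "retraction_maps TH TG (fst \<circ> FF) (hnn_incl G)"
    unfolding retraction_maps_def using ci cr by (auto simp: TGsp incl_eq FF_FI)
  then show "section_map TG TH (hnn_incl G)" unfolding section_map_def by blast
qed


end

context tsetting begin
lemma TH_SIN: "SIN_group (hnn_ext G) TH"
  unfolding SIN_group_def
proof (intro conjI TH_topgroup allI impI)
  interpret Hg: group "hnn_ext G" by (rule H_group)
  fix N assume "is_nbhd TH \<one>\<^bsub>hnn_ext G\<^esub> N"
  then obtain U where U: "openin TH U" "\<one>\<^bsub>hnn_ext G\<^esub> \<in> U" "U \<subseteq> N" by (auto simp: is_nbhd_def)
  then obtain U' where U': "openin KK U'" "U = FF -` U' \<inter> carrier (hnn_ext G)"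
    by (auto simp: TH_def openin_pullback_topology)
  have o1: "(\<one>, 0) \<in> U'" using U U' FF_one by auto
  have "\<exists>W V0. openin TG W \<and> openin DD V0 \<and> \<one> \<in> W \<and> 0 \<in> V0 \<and> W \<times> V0 \<subseteq> U'"
  proof -
    have "\<forall>x y. (x,y) \<in> U' \<longrightarrow> (\<exists>W V0. openin TG W \<and> openin DD V0 \<and> x \<in> W \<and> y \<in> V0 \<and> W \<times> V0 \<subseteq> U')"
      using U'(1) unfolding KK_def openin_prod_topology_alt .
    from this[rule_format, OF o1] show ?thesis .
  qed
  then obtain W V0 where WV: "openin TG W" "openin DD V0" "\<one> \<in> W" "0 \<in> V0" "W \<times> V0 \<subseteq> U'"
    by blast
  define W' where "W' = {x \<in> topspace TG. x \<in> W \<and> inv x \<in> W}"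
  have W'o: "openin TG W'"
  proof -
    have "openin TG {x \<in> topspace TG. inv x \<in> W}"
      by (rule openin_continuous_map_preimage[OF TGinv WV(1)])
    then have "openin TG (W \<inter> {x \<in> topspace TG. inv x \<in> W})" by (rule openin_Int[OF WV(1)])
    moreover have "W \<inter> {x \<in> topspace TG. inv x \<in> W} = W'" unfolding W'_def by blast
    ultimately show ?thesis by simp
  qed
  have W'inv: "sg G n x \<in> W'" if "x \<in> W'" for n x
    using that unfolding W'_def by (auto simp: sg_def TGsp)
  define V where "V = FF -` (W' \<times> {0}) \<inter> carrier (hnn_ext G)"
  have Vo: "openin TH V"
    unfolding TH_def openin_pullback_topology V_def
  proof (intro exI conjI)
    show "openin KK (W' \<times> {0})" unfolding KK_def DD_def using W'o by (simp add: openin_prod_Times_iff)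
  qed simp
  have one': "\<one> \<in> W'" unfolding W'_def using WV(3) by (simp add: TGsp)
  have oneV: "\<one>\<^bsub>hnn_ext G\<^esub> \<in> V"
    unfolding V_def using one' by (simp add: FF_one Hg.one_closed)
  have VU: "V \<subseteq> U"
  proof
    fix A assume AV: "A \<in> V"
    have A1: "FF A \<in> W' \<times> {0}" and A2: "A \<in> carrier (hnn_ext G)" using AV by (simp_all add: V_def)
    obtain x where x: "FF A = (x, 0)" "x \<in> W'" using A1 by (cases "FF A") auto
    have "x \<in> W" using x(2) by (simp add: W'_def)
    then have "(x, 0) \<in> W \<times> V0" using WV(4) by simp
    then have "(x, 0) \<in> U'" using WV(5) by (rule subsetD[rotated])
    then have "FF A \<in> U'" by (simp add: x(1))
    then show "A \<in> U" by (simp add: U'(2) A2)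
  qed
  have conjV: "g \<otimes>\<^bsub>hnn_ext G\<^esub> A \<otimes>\<^bsub>hnn_ext G\<^esub> inv\<^bsub>hnn_ext G\<^esub> g \<in> V"
    if g: "g \<in> carrier (hnn_ext G)" and A: "A \<in> V" for g A
  proof -
    have Ac: "A \<in> carrier (hnn_ext G)" and FA: "FF A \<in> W' \<times> {0}" using A by (simp_all add: V_def)
    obtain x where x: "FF A = (x, 0)" "x \<in> W'" using FA by (cases "FF A") auto
    have xc: "x \<in> carrier G" using x(2) by (simp add: W'_def TGsp)
    have "FF (g \<otimes>\<^bsub>hnn_ext G\<^esub> A \<otimes>\<^bsub>hnn_ext G\<^esub> inv\<^bsub>hnn_ext G\<^esub> g) = smul G (smul G (FF g) (x, 0)) (sinv G (FF g))"
      using g Ac x by (simp add: FF_mult FF_inv)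
    also have "\<dots> = (sg G (snd (FF g)) x, 0)" by (rule smul_conj[OF FF_closed[OF g] xc])
    finally show ?thesis using W'inv[OF x(2)] g Ac by (simp add: V_def)
  qed
  show "\<exists>V. is_nbhd TH \<one>\<^bsub>hnn_ext G\<^esub> V \<and> V \<subseteq> N \<and>
          (\<forall>g\<in>carrier (hnn_ext G). (\<lambda>v. g \<otimes>\<^bsub>hnn_ext G\<^esub> v \<otimes>\<^bsub>hnn_ext G\<^esub> inv\<^bsub>hnn_ext G\<^esub> g) ` V = V)"
  proof (intro exI conjI ballI)
    show "is_nbhd TH \<one>\<^bsub>hnn_ext G\<^esub> V" unfolding is_nbhd_def using Vo oneV by blast
    show "V \<subseteq> N" using VU U(3) by blast
    fix g assume g: "g \<in> carrier (hnn_ext G)"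
    show "(\<lambda>v. g \<otimes>\<^bsub>hnn_ext G\<^esub> v \<otimes>\<^bsub>hnn_ext G\<^esub> inv\<^bsub>hnn_ext G\<^esub> g) ` V = V"
    proof
      show "(\<lambda>v. g \<otimes>\<^bsub>hnn_ext G\<^esub> v \<otimes>\<^bsub>hnn_ext G\<^esub> inv\<^bsub>hnn_ext G\<^esub> g) ` V \<subseteq> V"
        using conjV[OF g] by auto
      show "V \<subseteq> (\<lambda>v. g \<otimes>\<^bsub>hnn_ext G\<^esub> v \<otimes>\<^bsub>hnn_ext G\<^esub> inv\<^bsub>hnn_ext G\<^esub> g) ` V"
      proof
        fix A assume A: "A \<in> V"
        then have Ac: "A \<in> carrier (hnn_ext G)" by (simp add: V_def)
        let ?B = "inv\<^bsub>hnn_ext G\<^esub> g \<otimes>\<^bsub>hnn_ext G\<^esub> A \<otimes>\<^bsub>hnn_ext G\<^esub> inv\<^bsub>hnn_ext G\<^esub> (inv\<^bsub>hnn_ext G\<^esub> g)"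
        have B: "?B \<in> V" using conjV[OF Hg.inv_closed[OF g] A] .
        have eq: "g \<otimes>\<^bsub>hnn_ext G\<^esub> ?B \<otimes>\<^bsub>hnn_ext G\<^esub> inv\<^bsub>hnn_ext G\<^esub> g = A"
          using g Ac by (simp add: Hg.m_assoc Hg.inv_inv) (simp add: Hg.m_assoc[symmetric])
        show "A \<in> (\<lambda>v. g \<otimes>\<^bsub>hnn_ext G\<^esub> v \<otimes>\<^bsub>hnn_ext G\<^esub> inv\<^bsub>hnn_ext G\<^esub> g) ` V"
          by (rule rev_image_eqI[where f = "\<lambda>v. g \<otimes>\<^bsub>hnn_ext G\<^esub> v \<otimes>\<^bsub>hnn_ext G\<^esub> inv\<^bsub>hnn_ext G\<^esub> g", OF B eq[symmetric]])
      qed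
    qed
  qed
qed

end

theorem mainTheorem16:
  fixes G :: "('a, 'b) monoid_scheme" and TG :: "'a topology"
  assumes "comm_group G"
    and "topological_group G TG"
    and "metrizable_space TG"
  shows "\<exists>TH :: 'a hnn_word set topology.
           SIN_group (hnn_ext G) TH \<and> metrizable_space TH \<and>
           hnn_incl G \<in> hom G (hnn_ext G) \<and>
           embedding_map TG TH (hnn_incl G)"
proof -
  interpret tsetting G TG
    using assms(1,2) by (simp add: tsetting_def tsetting_axioms_def)
  show ?thesis using TH_SIN TH_metrizable[OF assms(3)] incl_hom incl_embed by blast
qed

end
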